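(* Let $\mathcal{D}$ be a $\{K_3,K_4\}$-decomposition of $K_{18}$ with $\alpha=13$, let $W$ be the set of vertices $x$ with $\alpha_x\ge 2$, and for $i\in\{0,1,2,3\}$ let $t_i$ be the number of copies of $K_3$ in $\mathcal{D}$ having exactly $i$ vertices in $W$. Then $(t_0,t_1,t_2,t_3)\neq(0,4,3,6)$.
   Context: A $\{K_3,K_4\}$-decomposition of $K_v$ is a collection of subgraphs, each isomorphic to $K_3$ or $K_4$, such that every edge of $K_v$ lies in exactly one of them. $\alpha$ is the number of copies of $K_3$ in the decomposition, and for a vertex $x$, $\alpha_x$ is the number of copies of $K_3$ in the decomposition containing $x$. *)

theory Defs
  imports Main
begin

text \<open>A {K3,K4}-decomposition of the complete graph on vertex set V: a collection
of vertex sets (each spanning a copy of K3 or K4) such that every edge {x,y}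
of K_V lies in exactly one of them.\<close>
definition K34_decomp :: "'a set \<Rightarrow> 'a set set \<Rightarrow> bool" where
  "K34_decomp V D \<longleftrightarrow>
     (\<forall>B\<in>D. B \<subseteq> V \<and> (card B = 3 \<or> card B = 4)) \<and>
     (\<forall>x\<in>V. \<forall>y\<in>V. x \<noteq> y \<longrightarrow> (\<exists>!B. B \<in> D \<and> x \<in> B \<and> y \<in> B))"

definition alpha :: "'a set set \<Rightarrow> nat" where
  "alpha D = card {B\<in>D. card B = 3}"

definition alpha_v :: "'a set set \<Rightarrow> 'a \<Rightarrow> nat" where
  "alpha_v D x = card {B\<in>D. card B = 3 \<and> x \<in> B}"

definition Wset :: "'a set \<Rightarrow> 'a set set \<Rightarrow> 'a set" where
  "Wset V D = {x\<in>V. alpha_v D x \<ge> 2}"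

definition tcount :: "'a set \<Rightarrow> 'a set set \<Rightarrow> nat \<Rightarrow> nat" where
  "tcount V D i = card {B\<in>D. card B = 3 \<and> card (B \<inter> Wset V D) = i}"

end

theory Submission
  imports Defs
begin

lemma dc:
  assumes "finite F" "finite S"
  shows "(\<Sum>B\<in>F. \<Sum>x\<in>S\<inter>B. h x B) = (\<Sum>x\<in>S. \<Sum>B\<in>{B\<in>F. x\<in>B}. h x B)"
proof -
  have "(\<Sum>B\<in>F. \<Sum>x\<in>S\<inter>B. h x B) = (\<Sum>B\<in>F. \<Sum>x\<in>S. if x\<in>B then h x B else 0)"
    using assms by (simp add: sum.inter_restrict)
  also have "\<dots> = (\<Sum>x\<in>S. \<Sum>B\<in>F. if x\<in>B then h x B else 0)" by (rule sum.swap)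
  also have "\<dots> = (\<Sum>x\<in>S. \<Sum>B\<in>{B\<in>F. x\<in>B}. h x B)"
    using assms by (simp add: sum.inter_filter)
  finally show ?thesis .
qed

lemma dc1:
  assumes "finite F" "finite S"
  shows "(\<Sum>B\<in>F. card (B \<inter> S)) = (\<Sum>x\<in>S. card {B\<in>F. x\<in>B})"
  using dc[OF assms, of "\<lambda>x B. 1::nat"] by (simp add: Int_commute)

lemma part:
  assumes K: "K34_decomp V D" and x: "x \<in> V" and S: "S \<subseteq> V" and fV: "finite V"
  shows "(\<Sum>B\<in>{B\<in>D. x\<in>B}. card ((B - {x}) \<inter> S)) = card (S - {x})"
proof -
  have sub: "\<forall>B\<in>D. B \<subseteq> V" using K unfolding K34_decomp_def by blast
  have ex: "\<And>y. y \<in> V \<Longrightarrow> y \<noteq> x \<Longrightarrow> \<exists>!B. B \<in> D \<and> x \<in> B \<and> y \<in> B"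
    using K x unfolding K34_decomp_def by blast
  have fD: "finite D" using sub fV by (meson Pow_iff finite_Pow_iff finite_subset subsetI)
  have eq: "S - {x} = (\<Union>B\<in>{B\<in>D. x\<in>B}. (B - {x}) \<inter> S)"
  proof
    show "S - {x} \<subseteq> (\<Union>B\<in>{B\<in>D. x\<in>B}. (B - {x}) \<inter> S)"
    proof
      fix y assume "y \<in> S - {x}"
      then obtain B where "B \<in> D" "x \<in> B" "y \<in> B" using ex S by blast
      then show "y \<in> (\<Union>B\<in>{B\<in>D. x\<in>B}. (B - {x}) \<inter> S)" using \<open>y \<in> S - {x}\<close> by blast
    qed
  qed blast
  have "card (\<Union>B\<in>{B\<in>D. x\<in>B}. (B - {x}) \<inter> S) = (\<Sum>B\<in>{B\<in>D. x\<in>B}. card ((B - {x}) \<inter> S))"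
  proof (rule card_UN_disjoint)
    show "finite {B\<in>D. x\<in>B}" using fD by simp
    show "\<forall>i\<in>{B \<in> D. x \<in> B}. finite ((i - {x}) \<inter> S)" using S fV finite_subset by blast
    show "\<forall>i\<in>{B \<in> D. x \<in> B}. \<forall>j\<in>{B \<in> D. x \<in> B}. i \<noteq> j \<longrightarrow> (i - {x}) \<inter> S \<inter> ((j - {x}) \<inter> S) = {}"
      using ex S by blast
  qed
  then show ?thesis using eq by simp
qed


lemma sum_by_t:
  assumes "finite T" "\<forall>B\<in>T. card (g B) \<le> 3"
  shows "(\<Sum>B\<in>T. f (card (g B))) = f 0 * card {B\<in>T. card (g B) = 0} + f 1 * card {B\<in>T. card (g B) = 1}
          + f 2 * card {B\<in>T. card (g B) = 2} + f 3 * card {B\<in>T. card (g B) = 3}"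
proof -
  let ?T = "\<lambda>i. {B\<in>T. card (g B) = i}"
  have "T = ?T 0 \<union> ?T 1 \<union> ?T 2 \<union> ?T 3" using assms(2) by auto
  then have "(\<Sum>B\<in>T. f (card (g B))) = (\<Sum>B\<in>?T 0 \<union> ?T 1 \<union> ?T 2 \<union> ?T 3. f (card (g B)))" by simp
  also have "\<dots> = (\<Sum>B\<in>?T 0. f (card (g B))) + (\<Sum>B\<in>?T 1. f (card (g B)))
     + (\<Sum>B\<in>?T 2. f (card (g B))) + (\<Sum>B\<in>?T 3. f (card (g B)))"
    using assms(1) by (subst sum.union_disjoint, auto)+
  also have "\<dots> = f 0 * card (?T 0) + f 1 * card (?T 1) + f 2 * card (?T 2) + f 3 * card (?T 3)"
    by simp
  finally show ?thesis .
qed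

theorem mainTheorem11:
  fixes D :: "nat set set"
  assumes "K34_decomp {..<18} D"
    and "alpha D = 13"
  shows "(tcount {..<18} D 0, tcount {..<18} D 1, tcount {..<18} D 2, tcount {..<18} D 3)
           \<noteq> (0, 4, 3, 6)"
proof
  assume H: "(tcount {..<18} D 0, tcount {..<18} D 1, tcount {..<18} D 2, tcount {..<18} D 3) = (0, 4, 3, 6)"
  define V :: "nat set" where "V = {..<18}"
  have K: "K34_decomp V D" using assms(1) V_def by simp
  have fV: "finite V" and cV: "card V = 18" by (simp_all add: V_def)
  have sub: "\<forall>B\<in>D. B \<subseteq> V" and c34: "\<forall>B\<in>D. card B = 3 \<or> card B = 4"
    using K unfolding K34_decomp_def by blast+
  have fD: "finite D" using sub fV by (meson Pow_iff finite_Pow_iff finite_subset subsetI)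
  have finB: "\<And>B. B \<in> D \<Longrightarrow> finite B" using sub fV finite_subset by blast
  define T where "T = {B\<in>D. card B = 3}"
  define Q where "Q = {B\<in>D. card B = 4}"
  have fT: "finite T" and fQ: "finite Q" using fD by (simp_all add: T_def Q_def)
  have cT: "card T = 13" using assms(2) by (simp add: T_def alpha_def)
  define a where "a x = card {B\<in>T. x\<in>B}" for x
  define k where "k x = card {B\<in>Q. x\<in>B}" for x
  define W where "W = Wset V D"
  have W_eq: "W = {x\<in>V. a x \<ge> 2}"
    unfolding W_def Wset_def a_def alpha_v_def T_def by (simp add: conj_ac)
  have fW: "finite W" using fV W_eq by simp
  have WV: "W \<subseteq> V" using W_eq by auto
  have tc: "\<And>i. tcount V D i = card {B\<in>T. card (B \<inter> W) = i}"
    by (simp add: tcount_def T_def W_def conj_assoc)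
  have t0: "card {B\<in>T. card (B \<inter> W) = 0} = 0" and t1: "card {B\<in>T. card (B \<inter> W) = 1} = 4"
   and t2: "card {B\<in>T. card (B \<inter> W) = 2} = 3" and t3: "card {B\<in>T. card (B \<inter> W) = 3} = 6"
    using H tc V_def by auto
  have Tle: "\<forall>B\<in>T. card (B \<inter> W) \<le> 3"
  proof
    fix B assume "B \<in> T"
    then have "card B = 3" "finite B" using T_def finB by auto
    then show "card (B \<inter> W) \<le> 3" by (metis card_mono inf_le1)
  qed
  have deg: "2 * a x + 3 * k x = 17" if xV: "x \<in> V" for x
  proof -
    have p: "(\<Sum>B\<in>{B\<in>D. x\<in>B}. card ((B - {x}) \<inter> V)) = card (V - {x})"
      by (rule part[OF K xV _ fV]) simp
    have "card (V - {x}) = 17" using xV cV fV by simp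
    have split: "{B\<in>D. x\<in>B} = {B\<in>T. x\<in>B} \<union> {B\<in>Q. x\<in>B}" using c34 T_def Q_def by auto
    have "(\<Sum>B\<in>{B\<in>D. x\<in>B}. card ((B - {x}) \<inter> V)) =
       (\<Sum>B\<in>{B\<in>T. x\<in>B}. card ((B - {x}) \<inter> V)) + (\<Sum>B\<in>{B\<in>Q. x\<in>B}. card ((B - {x}) \<inter> V))"
      unfolding split by (rule sum.union_disjoint) (use fD T_def Q_def in auto)
    also have "(\<Sum>B\<in>{B\<in>T. x\<in>B}. card ((B - {x}) \<inter> V)) = (\<Sum>B\<in>{B\<in>T. x\<in>B}. 2)"
    proof (rule sum.cong)
      fix B assume "B \<in> {B\<in>T. x\<in>B}"
      then have "B \<subseteq> V" "card B = 3" "x \<in> B" using T_def sub by auto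
      then show "card ((B - {x}) \<inter> V) = 2"
        proof -
          have "(B - {x}) \<inter> V = B - {x}" using \<open>B \<subseteq> V\<close> by auto
          then show ?thesis using \<open>x \<in> B\<close> by (simp add: card_Diff_singleton \<open>card B = 3\<close>)
        qed
    qed simp
    also have "(\<Sum>B\<in>{B\<in>Q. x\<in>B}. card ((B - {x}) \<inter> V)) = (\<Sum>B\<in>{B\<in>Q. x\<in>B}. 3)"
    proof (rule sum.cong)
      fix B assume "B \<in> {B\<in>Q. x\<in>B}"
      then have "B \<subseteq> V" "card B = 4" "x \<in> B" using Q_def sub by auto
      then show "card ((B - {x}) \<inter> V) = 3"
        proof -
          have "(B - {x}) \<inter> V = B - {x}" using \<open>B \<subseteq> V\<close> by auto
          then show ?thesis using \<open>x \<in> B\<close> by (simp add: card_Diff_singleton \<open>card B = 4\<close>)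
        qed
    qed simp
    finally show ?thesis using p \<open>card (V - {x}) = 17\<close> by (simp add: a_def k_def mult.commute)
  qed
  have aval: "a x = 1 \<or> a x = 4 \<or> a x = 7" if "x \<in> V" for x
    using deg[OF that] by presburger
  have a_nW: "a x = 1" if "x \<in> V - W" for x using aval that W_eq by force
  have a_W4: "a x \<ge> 4" if "x \<in> W" for x using aval that W_eq by force
  have s1: "(\<Sum>B\<in>T. card (B \<inter> W)) = 28"
    using sum_by_t[OF fT Tle, of "\<lambda>m. m"] t0 t1 t2 t3 by simp
  have s1': "(\<Sum>B\<in>T. card (B \<inter> W)) = (\<Sum>x\<in>W. a x)"
    unfolding a_def by (rule dc1[OF fT fW])
  have s2: "(\<Sum>B\<in>T. card (B \<inter> (V - W))) = (\<Sum>x\<in>V-W. a x)"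
    unfolding a_def by (rule dc1[OF fT]) (use fV in simp)
  have s2': "(\<Sum>x\<in>V-W. a x) = card (V - W)" using a_nW by simp
  have s3: "(\<Sum>B\<in>T. card (B \<inter> W)) + (\<Sum>B\<in>T. card (B \<inter> (V - W))) = 39"
  proof -
    have "(\<Sum>B\<in>T. card (B \<inter> W)) + (\<Sum>B\<in>T. card (B \<inter> (V - W))) = (\<Sum>B\<in>T. 3)"
      unfolding sum.distrib[symmetric]
    proof (rule sum.cong)
      fix B assume "B \<in> T"
      then have "B \<subseteq> V" "card B = 3" "finite B" using T_def sub finB by auto
      then show "card (B \<inter> W) + card (B \<inter> (V - W)) = 3"
        by (metis Diff_Diff_Int Int_Diff Int_absorb2 card_Int_Diff)
    qed simp
    then show ?thesis using cT by simp
  qed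
  have cVW: "card (V - W) = 11" using s1 s2 s2' s3 by simp
  have cW: "card W = 7" using cVW cV WV fW card_Diff_subset[OF fW WV] by simp
  have a_W: "a x = 4" if "x \<in> W" for x
  proof -
    have "(\<Sum>x\<in>W. a x) = (\<Sum>x\<in>W. 4) + (\<Sum>x\<in>W. a x - 4)"
      unfolding sum.distrib[symmetric] by (rule sum.cong) (use a_W4 in auto)
    then have "(\<Sum>x\<in>W. a x - 4) = 0" using s1 s1' cW by simp
    then have "a x - 4 = 0" using fW that by simp
    then show ?thesis using a_W4[OF that] by simp
  qed
  have k_W: "k x = 3" if "x \<in> W" for x using deg[of x] a_W[OF that] that WV by auto
  have k_nW: "k x = 5" if "x \<in> V - W" for x using deg[of x] a_nW[OF that] that by auto
  define PT where "PT x = (\<Sum>B\<in>{B\<in>T. x\<in>B}. card ((B - {x}) \<inter> W))" for x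
  define PQ where "PQ x = (\<Sum>B\<in>{B\<in>Q. x\<in>B}. card ((B - {x}) \<inter> W))" for x
  have P6: "PT x + PQ x = 6" if "x \<in> W" for x
  proof -
    have xV: "x \<in> V" using that WV by auto
    have p: "(\<Sum>B\<in>{B\<in>D. x\<in>B}. card ((B - {x}) \<inter> W)) = card (W - {x})"
      by (rule part[OF K xV WV fV])
    have "card (W - {x}) = 6" using that cW fW by simp
    have split: "{B\<in>D. x\<in>B} = {B\<in>T. x\<in>B} \<union> {B\<in>Q. x\<in>B}" using c34 T_def Q_def by auto
    have "(\<Sum>B\<in>{B\<in>D. x\<in>B}. card ((B - {x}) \<inter> W)) = PT x + PQ x"
      unfolding split PT_def PQ_def by (rule sum.union_disjoint) (use fD T_def Q_def in auto)
    then show ?thesis using p \<open>card (W - {x}) = 6\<close> by simp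
  qed
  have sPT: "(\<Sum>x\<in>W. PT x) = 42"
  proof -
    have "(\<Sum>x\<in>W. PT x) = (\<Sum>B\<in>T. \<Sum>x\<in>W\<inter>B. card ((B - {x}) \<inter> W))"
      unfolding PT_def by (rule dc[OF fT fW, symmetric])
    also have "\<dots> = (\<Sum>B\<in>T. card (B \<inter> W) * (card (B \<inter> W) - 1))"
    proof (rule sum.cong)
      fix B assume "B \<in> T"
      then have fB: "finite B" using T_def sub finB by auto
      have "(\<Sum>x\<in>W\<inter>B. card ((B - {x}) \<inter> W)) = (\<Sum>x\<in>W\<inter>B. card (B \<inter> W) - 1)"
      proof (rule sum.cong)
        fix x assume "x \<in> W \<inter> B"
        then have "(B - {x}) \<inter> W = (B \<inter> W) - {x}" by auto
        then show "card ((B - {x}) \<inter> W) = card (B \<inter> W) - 1" using \<open>x \<in> W \<inter> B\<close> fB by simp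
      qed simp
      then show "(\<Sum>x\<in>W\<inter>B. card ((B - {x}) \<inter> W)) = card (B \<inter> W) * (card (B \<inter> W) - 1)"
        by (simp add: Int_commute)
    qed simp
    also have "\<dots> = 42"
      using sum_by_t[OF fT Tle, of "\<lambda>m. m * (m - 1)"] t0 t1 t2 t3 by simp
    finally show ?thesis .
  qed
  have "(\<Sum>x\<in>W. PT x + PQ x) = 42" using P6 cW by simp
  then have "(\<Sum>x\<in>W. PQ x) = 0" using sPT by (simp add: sum.distrib)
  then have PQ0: "PQ x = 0" if "x \<in> W" for x using fW that by simp
  have Qle: "card (B \<inter> W) \<le> 1" if "B \<in> Q" for B
  proof (cases "B \<inter> W = {}")
    case False
    then obtain x where x: "x \<in> B" "x \<in> W" by blast
    have fB: "finite B" using that Q_def finB by auto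
    have "finite {B\<in>Q. x\<in>B}" using fQ by simp
    then have "card ((B - {x}) \<inter> W) = 0" using PQ0[OF x(2)] that x unfolding PQ_def by simp
    then have "(B - {x}) \<inter> W = {}" using fB by simp
    then have "B \<inter> W \<subseteq> {x}" by auto
    then have "card (B \<inter> W) \<le> card {x}" by (intro card_mono) simp_all
    then show ?thesis by simp
  qed simp
  have sQW: "(\<Sum>B\<in>Q. card (B \<inter> W)) = 21"
  proof -
    have "(\<Sum>B\<in>Q. card (B \<inter> W)) = (\<Sum>x\<in>W. k x)"
      unfolding k_def by (rule dc1[OF fQ fW])
    also have "\<dots> = 21" using k_W cW by simp
    finally show ?thesis .
  qed
  have sQV: "4 * card Q = 76"
  proof -
    have "(\<Sum>B\<in>Q. card (B \<inter> V)) = (\<Sum>x\<in>V. k x)"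
      unfolding k_def by (rule dc1[OF fQ fV])
    also have "\<dots> = (\<Sum>x\<in>W. k x) + (\<Sum>x\<in>V - W. k x)"
      using sum.subset_diff[OF WV fV, of k] by (simp add: add.commute)
    also have "\<dots> = 76" using k_W k_nW cW cVW by simp
    finally have "(\<Sum>B\<in>Q. card (B \<inter> V)) = 76" .
    moreover have "(\<Sum>B\<in>Q. card (B \<inter> V)) = (\<Sum>B\<in>Q. 4)"
      by (rule sum.cong) (use Q_def sub in \<open>auto simp: Int_absorb2\<close>)
    ultimately show ?thesis by simp
  qed
  have "(\<Sum>B\<in>Q. card (B \<inter> W)) \<le> (\<Sum>B\<in>Q. 1)" by (rule sum_mono) (use Qle in auto)
  then show False using sQW sQV by simp
qed

end
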